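(* Let $\mathcal X$ be a countable set with the discrete topology and let $\varepsilon\in(0,1]$. There exists a test $T$ mapping each $P\in\Delta^*_{BD}$ to an open subset $T(P)$ of $\Omega$ such that (i) $P(T(P))\le\varepsilon$ for every $P\in\Delta^*_{BD}$, and (ii) for every probability measure $\zeta$ on $\Delta^*_{BD}$ with finite support there is a cylinder $C_\zeta$ with $\zeta(\{P\in\Delta^*_{BD}:\omega\notin T(P)\})=0$ for every $\omega\in C_\zeta$.
   Context: $\Omega=\mathcal X^{\mathbb N}$ with the product topology; $\omega^t$ is the cylinder of paths agreeing with $\omega$ in the first $t$ coordinates ($\omega^0=\Omega$); $\mathcal H$ is the set of cylinders. $\Sigma$ is a $\sigma$-algebra containing all open sets; $\mathbb P$ the set of finitely additive probabilities on $(\Omega,\Sigma)$; $P\in\mathbb P$ is strongly nonatomic if for every $E\in\Sigma$, $\alpha\in[0,1]$ there is $F\in\Sigma$, $F\subseteq E$, with $P(F)=\alpha P(E)$. A conditional probability is a function $P:\Sigma\times\mathcal H\to[0,1]$ such that for every $t\ge0$, $\omega$: (1) $P(\cdot\mid\omega^t)\in\mathbb P$; (2) $P(\omega^t\mid\omega^t)=1$; (3) $P(E\cap\omega^{t+n}\mid\omega^t)=P(E\mid\omega^{t+n})P(\omega^{t+n}\mid\omega^t)$ for all $E$, $n\ge0$. It is a conditional opinion if $P(\cdot\mid\Omega)$ is strongly nonatomic. Write $P(E)=P(E\mid\Omega)$. For conditional probabilities $P,Q$, $P$ merges with $Q$ if for every $\varepsilon>0$, $\lim_{t\to\infty}Q(\{\omega:\sup_{E\in\Sigma}|P(E\mid\omega^t)-Q(E\mid\omega^t)|>\varepsilon\})=0$.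 For $Q,R\in\mathbb P$, $Q\ll R$ means $R(E_n)\to0$ implies $Q(E_n)\to0$ for every sequence in $\Sigma$. A conditional probability $P$ has the Blackwell–Dubins property if for every $Q\in\mathbb P$ with $Q\ll P(\cdot\mid\Omega)$ there is a conditional probability $\widetilde Q$ with $\widetilde Q(\cdot\mid\Omega)=Q$ such that $P$ merges with $\widetilde Q$. $\Delta^*_{BD}$ is the set of conditional opinions with the Blackwell–Dubins property. *)

theory Defs
  imports "HOL-Probability.Probability"
begin

type_synonym 'x path = "nat \<Rightarrow> 'x"
type_synonym 'x cprob = "'x path set \<Rightarrow> 'x path set \<Rightarrow> real"

definition cyl :: "'x path \<Rightarrow> nat \<Rightarrow> 'x path set" where
  "cyl \<omega> t = {\<omega>'. \<forall>i<t. \<omega>' i = \<omega> i}"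

definition cylinders :: "'x path set set" where
  "cylinders = {C. \<exists>\<omega> t. C = cyl \<omega> t}"

text \<open>Open sets of the product topology on X^N, X carrying the discrete topology.\<close>
definition open_paths :: "'x path set \<Rightarrow> bool" where
  "open_paths U \<longleftrightarrow> (\<forall>\<omega>\<in>U. \<exists>t. cyl \<omega> t \<subseteq> U)"

text \<open>Finitely additive probabilities on (Omega, Sigma); represented as functions that
  vanish outside Sigma.\<close>
definition fa_prob :: "'x path set set \<Rightarrow> ('x path set \<Rightarrow> real) \<Rightarrow> bool" where
  "fa_prob S P \<longleftrightarrow>
     (\<forall>E. E \<notin> S \<longrightarrow> P E = 0) \<and>
     (\<forall>E\<in>S. 0 \<le> P E) \<and> P UNIV = 1 \<and>
     (\<forall>E\<in>S. \<forall>F\<in>S. E \<inter> F = {} \<longrightarrow> P (E \<union> F) = P E + P F)"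

definition strongly_nonatomic :: "'x path set set \<Rightarrow> ('x path set \<Rightarrow> real) \<Rightarrow> bool" where
  "strongly_nonatomic S P \<longleftrightarrow>
     (\<forall>E\<in>S. \<forall>\<alpha>::real. 0 \<le> \<alpha> \<and> \<alpha> \<le> 1 \<longrightarrow> (\<exists>F\<in>S. F \<subseteq> E \<and> P F = \<alpha> * P E))"

text \<open>Conditional probability P : Sigma x H -> [0,1]; represented as a function vanishing
  outside Sigma x H.\<close>
definition cond_prob :: "'x path set set \<Rightarrow> 'x cprob \<Rightarrow> bool" where
  "cond_prob S P \<longleftrightarrow>
     (\<forall>E C. C \<notin> cylinders \<longrightarrow> P E C = 0) \<and>
     (\<forall>\<omega> t. fa_prob S (\<lambda>E. P E (cyl \<omega> t)) \<and>
             P (cyl \<omega> t) (cyl \<omega> t) = 1 \<and>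
             (\<forall>E\<in>S. \<forall>n. P (E \<inter> cyl \<omega> (t + n)) (cyl \<omega> t) =
                          P E (cyl \<omega> (t + n)) * P (cyl \<omega> (t + n)) (cyl \<omega> t)))"

definition cond_opinion :: "'x path set set \<Rightarrow> 'x cprob \<Rightarrow> bool" where
  "cond_opinion S P \<longleftrightarrow> cond_prob S P \<and> strongly_nonatomic S (\<lambda>E. P E UNIV)"

definition merges :: "'x path set set \<Rightarrow> 'x cprob \<Rightarrow> 'x cprob \<Rightarrow> bool" where
  "merges S P Q \<longleftrightarrow>
     (\<forall>\<epsilon>>0. (\<lambda>t. Q {\<omega>. (SUP E\<in>S. \<bar>P E (cyl \<omega> t) - Q E (cyl \<omega> t)\<bar>) > \<epsilon>} UNIV)
               \<longlonglongrightarrow> 0)"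

definition abs_cont :: "'x path set set \<Rightarrow> ('x path set \<Rightarrow> real) \<Rightarrow> ('x path set \<Rightarrow> real) \<Rightarrow> bool" where
  "abs_cont S Q R \<longleftrightarrow>
     (\<forall>En :: nat \<Rightarrow> 'x path set. range En \<subseteq> S \<longrightarrow>
        (\<lambda>n. R (En n)) \<longlonglongrightarrow> 0 \<longrightarrow> (\<lambda>n. Q (En n)) \<longlonglongrightarrow> 0)"

definition blackwell_dubins :: "'x path set set \<Rightarrow> 'x cprob \<Rightarrow> bool" where
  "blackwell_dubins S P \<longleftrightarrow>
     (\<forall>Q. fa_prob S Q \<and> abs_cont S Q (\<lambda>E. P E UNIV) \<longrightarrow>
        (\<exists>Q'. cond_prob S Q' \<and> (\<forall>E. Q' E UNIV = Q E) \<and> merges S P Q'))"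

definition Delta_BD :: "'x path set set \<Rightarrow> 'x cprob set" where
  "Delta_BD S = {P. cond_opinion S P \<and> blackwell_dubins S P}"

end

theory Submission
  imports Defs
begin

lemma cyl_0[simp]: "cyl \<omega> 0 = UNIV" by (simp add: cyl_def)
lemma cyl_antimono: "s \<le> t \<Longrightarrow> cyl \<omega> t \<subseteq> cyl \<omega> s" by (auto simp: cyl_def)
lemma cyl_self: "\<omega> \<in> cyl \<omega> t" by (simp add: cyl_def)
lemma cyl_same: "\<omega>' \<in> cyl \<omega> t \<Longrightarrow> cyl \<omega>' t = cyl \<omega> t" by (auto simp: cyl_def)
lemma open_cyl: "open_paths (cyl \<omega> t)"
  unfolding open_paths_def using cyl_same by blast

lemma fa_nonneg: assumes "fa_prob S \<mu>" shows "0 \<le> \<mu> E"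
  using assms unfolding fa_prob_def by (cases "E \<in> S") auto

lemma fa_add: assumes "fa_prob S \<mu>" "E \<in> S" "F \<in> S" "E \<inter> F = {}"
  shows "\<mu> (E \<union> F) = \<mu> E + \<mu> F"
  using assms unfolding fa_prob_def by auto

lemma fa_empty: assumes sa: "sigma_algebra UNIV S" and fa: "fa_prob S \<mu>" shows "\<mu> {} = 0"
proof -
  interpret s: sigma_algebra UNIV S by (rule sa)
  have "\<mu> ({} \<union> {}) = \<mu> {} + \<mu> {}" by (rule fa_add[OF fa]) auto
  thus ?thesis by simp
qed

lemma fa_compl: assumes sa: "sigma_algebra UNIV S" and fa: "fa_prob S \<mu>" and E: "E \<in> S"
  shows "\<mu> (- E) = 1 - \<mu> E"
proof -
  interpret s: sigma_algebra UNIV S by (rule sa)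
  have cE: "- E \<in> S" using s.compl_sets[OF E] by (simp add: Compl_eq_Diff_UNIV)
  have "\<mu> (E \<union> - E) = \<mu> E + \<mu> (- E)" by (rule fa_add[OF fa E cE]) auto
  moreover have "\<mu> UNIV = 1" using fa unfolding fa_prob_def by auto
  ultimately show ?thesis by simp
qed

lemma fa_le1: assumes sa: "sigma_algebra UNIV S" and fa: "fa_prob S \<mu>" shows "\<mu> E \<le> 1"
proof (cases "E \<in> S")
  case True thus ?thesis using fa_compl[OF sa fa True] fa_nonneg[OF fa, of "- E"] by simp
next
  case False thus ?thesis using fa unfolding fa_prob_def by auto
qed

lemma fa_mono: assumes sa: "sigma_algebra UNIV S" and fa: "fa_prob S \<mu>"
  and E: "E \<in> S" and F: "F \<in> S" and sub: "E \<subseteq> F"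
  shows "\<mu> E \<le> \<mu> F"
proof -
  interpret s: sigma_algebra UNIV S by (rule sa)
  have "\<mu> (E \<union> (F - E)) = \<mu> E + \<mu> (F - E)" by (rule fa_add[OF fa E]) (use E F in auto)
  moreover have "E \<union> (F - E) = F" using sub by auto
  ultimately show ?thesis using fa_nonneg[OF fa, of "F - E"] by simp
qed

lemma cp_fa: "cond_prob S P \<Longrightarrow> fa_prob S (\<lambda>E. P E (cyl \<omega> t))"
  unfolding cond_prob_def by auto

lemma cp_uncond: "cond_prob S P \<Longrightarrow> fa_prob S (\<lambda>E. P E UNIV)"
  using cp_fa[of S P undefined 0] by simp

lemma cp_chain: "cond_prob S P \<Longrightarrow> E \<in> S \<Longrightarrow>
    P (E \<inter> cyl \<omega> n) UNIV = P E (cyl \<omega> n) * P (cyl \<omega> n) UNIV"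
  unfolding cond_prob_def
  by (metis add_0 cyl_0)

lemma BD_small:
  fixes S :: "'x path set set" and P :: "'x cprob" and x :: "'x path"
  assumes sa: "sigma_algebra UNIV S"
    and opn: "\<forall>U. open_paths U \<longrightarrow> U \<in> S"
    and PD: "P \<in> Delta_BD S" and eps: "0 < \<epsilon>"
  shows "\<exists>t. P (cyl x t) UNIV \<le> \<epsilon>"
proof (rule ccontr)
  assume "\<not> ?thesis"
  hence H: "\<And>t. \<epsilon> < P (cyl x t) UNIV" by (simp add: not_le)
  interpret s: sigma_algebra UNIV S by (rule sa)
  have cp: "cond_prob S P" and sn: "strongly_nonatomic S (\<lambda>E. P E UNIV)"
    and bd: "blackwell_dubins S P" using PD by (auto simp: Delta_BD_def cond_opinion_def)
  define Pu where "Pu E = P E UNIV" for E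
  have Pu_eq: "(\<lambda>E. P E UNIV) = Pu" by (simp add: Pu_def fun_eq_iff)
  define C where "C t = cyl x t" for t
  have faP: "fa_prob S Pu" using cp_uncond[OF cp] by (simp add: Pu_eq)
  have CS: "C t \<in> S" for t unfolding C_def using opn open_cyl by blast
  have Cmono: "s \<le> t \<Longrightarrow> C t \<subseteq> C s" for s t unfolding C_def by (rule cyl_antimono)
  have C0: "C 0 = UNIV" by (simp add: C_def)
  have cS: "- F \<in> S" if "F \<in> S" for F using s.compl_sets[OF that] by (simp add: Compl_eq_Diff_UNIV)
  define heavy where "heavy F \<longleftrightarrow> (\<exists>\<alpha>>0. \<forall>t. \<alpha> \<le> Pu (F \<inter> C t))" for F
  have hmono: "Pu (F \<inter> C t) \<le> Pu (F \<inter> C s)" if "F \<in> S" "s \<le> t" for F s t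
    by (rule fa_mono[OF sa faP]) (use that CS Cmono in auto)
  have nheavy: "\<exists>t. Pu (F \<inter> C t) < a" if "\<not> heavy F" "a > 0" for F a
    using that unfolding heavy_def by (meson not_le)
  have hunion: "heavy F \<or> heavy G" if "F \<in> S" "G \<in> S" "F \<inter> G = {}" "heavy (F \<union> G)" for F G
  proof (rule ccontr)
    assume nh: "\<not> (heavy F \<or> heavy G)"
    from that(4) obtain \<alpha> where a: "\<alpha> > 0" "\<And>t. \<alpha> \<le> Pu ((F \<union> G) \<inter> C t)"
      unfolding heavy_def by auto
    obtain t1 where t1: "Pu (F \<inter> C t1) < \<alpha>/2" using nheavy[of F "\<alpha>/2"] nh a(1) by auto
    obtain t2 where t2: "Pu (G \<inter> C t2) < \<alpha>/2" using nheavy[of G "\<alpha>/2"] nh a(1) by auto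
    define t where "t = max t1 t2"
    have "Pu (F \<inter> C t) \<le> Pu (F \<inter> C t1)" using hmono that(1) by (simp add: t_def)
    moreover have "Pu (G \<inter> C t) \<le> Pu (G \<inter> C t2)" using hmono that(2) by (simp add: t_def)
    moreover have "Pu ((F \<union> G) \<inter> C t) = Pu (F \<inter> C t) + Pu (G \<inter> C t)"
    proof -
      have "(F \<union> G) \<inter> C t = (F \<inter> C t) \<union> (G \<inter> C t)" by auto
      thus ?thesis using fa_add[OF faP, of "F \<inter> C t" "G \<inter> C t"] that CS by auto
    qed
    ultimately show False using a(2)[of t] t1 t2 by linarith
  qed
  have split: "\<exists>F\<in>S. heavy F \<and> heavy (- F)"
  proof (rule ccontr)
    assume ns: "\<not> ?thesis"
    have empty_nh: "\<not> heavy {}" unfolding heavy_def using fa_empty[OF sa faP] by auto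
    have step: "\<exists>F\<in>S. \<not> heavy (- F) \<and> Pu F = (1/2)^k" for k
    proof (induction k)
      case 0 show ?case using empty_nh faP s.top by (auto simp: fa_prob_def intro!: bexI[of _ UNIV])
    next
      case (Suc k)
      then obtain F where F: "F \<in> S" "\<not> heavy (-F)" "Pu F = (1/2)^k" by blast
      from sn F(1) obtain F' where F': "F' \<in> S" "F' \<subseteq> F" "Pu F' = 1/2 * Pu F"
      proof -
        have "\<exists>G\<in>S. G \<subseteq> F \<and> P G UNIV = (1/2) * P F UNIV"
        proof -
          have h: "0 \<le> (1/2::real) \<and> (1/2::real) \<le> 1" by simp
          have "\<forall>E\<in>S. \<forall>\<alpha>::real. 0 \<le> \<alpha> \<and> \<alpha> \<le> 1 \<longrightarrow> (\<exists>G\<in>S. G \<subseteq> E \<and> P G UNIV = \<alpha> * P E UNIV)"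
            using sn unfolding strongly_nonatomic_def by simp
          thus ?thesis using F(1) h by blast
        qed
        thus ?thesis using that unfolding Pu_def by blast
      qed
      show ?case
      proof (cases "heavy (- F')")
        case False thus ?thesis using F' F by (auto intro!: bexI[of _ F'])
      next
        case True
        hence nF': "\<not> heavy F'" using ns F'(1) by auto
        have eq: "-(F - F') = -F \<union> F'" by auto
        have "\<not> heavy (-F \<union> F')" using hunion[of "-F" F'] cS[OF F(1)] F'(1,2) F(2) nF' by auto
        moreover have "Pu (F - F') = Pu F - Pu F'"
        proof -
          have "Pu (F' \<union> (F - F')) = Pu F' + Pu (F - F')"
            by (rule fa_add[OF faP]) (use F F' in auto)
          moreover have "F' \<union> (F - F') = F" using F'(2) by auto
          ultimately show ?thesis by simp
        qed
        ultimately show ?thesis using F F' eq by (auto intro!: bexI[of _ "F - F'"])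
      qed
    qed
    obtain k where k: "(1/2::real)^k < \<epsilon>" using real_arch_pow_inv[OF eps, of "1/2"] by auto
    obtain F where F: "F \<in> S" "\<not> heavy (-F)" "Pu F = (1/2)^k" using step by blast
    obtain t where t: "Pu (-F \<inter> C t) < \<epsilon> - Pu F" using nheavy[OF F(2), of "\<epsilon> - Pu F"] k F(3) by auto
    have "Pu (C t) = Pu (F \<inter> C t) + Pu (-F \<inter> C t)"
    proof -
      have "C t = (F \<inter> C t) \<union> (-F \<inter> C t)" by auto
      thus ?thesis using fa_add[OF faP, of "F \<inter> C t" "-F \<inter> C t"] F CS cS by auto
    qed
    moreover have "Pu (F \<inter> C t) \<le> Pu F" by (rule fa_mono[OF sa faP]) (use F CS in auto)
    ultimately have "Pu (C t) < \<epsilon>" using t by linarith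
    thus False using H[of t] by (simp add: Pu_def C_def)
  qed
  then obtain F where F: "F \<in> S" "heavy F" "heavy (-F)" by blast
  obtain \<alpha> where al: "\<alpha> > 0" "\<And>t. \<alpha> \<le> Pu (F \<inter> C t)" using F(2) unfolding heavy_def by auto
  obtain \<beta> where be: "\<beta> > 0" "\<And>t. \<beta> \<le> Pu (-F \<inter> C t)" using F(3) unfolding heavy_def by auto
  define pF where "pF = Pu F"
  have pF: "\<alpha> \<le> pF" using al(2)[of 0] by (simp add: C0 pF_def)
  hence pFpos: "pF > 0" using al(1) by linarith
  define Q where "Q E = (if E \<in> S then Pu (E \<inter> F) / pF else 0)" for E
  have faQ: "fa_prob S Q"
    unfolding fa_prob_def
  proof (intro conjI ballI allI impI)
    fix E assume "E \<notin> S" thus "Q E = 0" by (simp add: Q_def)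
  next
    fix E show "0 \<le> Q E" using fa_nonneg[OF faP] pFpos by (simp add: Q_def)
  next
    show "Q UNIV = 1" using pFpos by (simp add: Q_def pF_def)
  next
    fix E G assume EG: "E \<in> S" "G \<in> S" "E \<inter> G = {}"
    have "(E \<union> G) \<inter> F = (E \<inter> F) \<union> (G \<inter> F)" by auto
    hence "Pu ((E \<union> G) \<inter> F) = Pu (E \<inter> F) + Pu (G \<inter> F)"
      using fa_add[OF faP, of "E \<inter> F" "G \<inter> F"] EG F(1) by auto
    moreover have "E \<union> G \<in> S" using EG by auto
    ultimately show "Q (E \<union> G) = Q E + Q G" using EG by (simp add: Q_def add_divide_distrib)
  qed
  have acQ: "abs_cont S Q (\<lambda>E. P E UNIV)"
    unfolding abs_cont_def Pu_eq
  proof (intro allI impI)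
    fix En :: "nat \<Rightarrow> 'x path set"
    assume rS: "range En \<subseteq> S" and lim: "(\<lambda>n. Pu (En n)) \<longlonglongrightarrow> 0"
    have up: "Q (En n) \<le> Pu (En n) / pF" for n
    proof -
      have "En n \<in> S" using rS by auto
      moreover have "Pu (En n \<inter> F) \<le> Pu (En n)"
        by (rule fa_mono[OF sa faP]) (use rS F in auto)
      ultimately show ?thesis using pFpos by (simp add: Q_def divide_right_mono)
    qed
    have "(\<lambda>n. Pu (En n) / pF) \<longlonglongrightarrow> 0 / pF" by (intro tendsto_divide lim tendsto_const) (use pFpos in auto)
    hence l2: "(\<lambda>n. Pu (En n) / pF) \<longlonglongrightarrow> 0" by simp
    show "(\<lambda>n. Q (En n)) \<longlonglongrightarrow> 0"
      by (rule tendsto_sandwich[OF _ _ tendsto_const l2])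
         (use up fa_nonneg[OF faQ] in auto)
  qed
  obtain Q' where Q': "cond_prob S Q'" "\<And>E. Q' E UNIV = Q E" "merges S P Q'"
    using bd faQ acQ unfolding blackwell_dubins_def by blast
  define A where "A t = {\<omega>. (SUP E\<in>S. \<bar>P E (cyl \<omega> t) - Q' E (cyl \<omega> t)\<bar>) > \<beta>/2}" for t
  have AS: "A t \<in> S" for t
  proof -
    have "open_paths (A t)" unfolding open_paths_def
    proof
      fix \<omega> assume "\<omega> \<in> A t"
      hence "cyl \<omega> t \<subseteq> A t" by (auto simp: A_def dest!: cyl_same)
      thus "\<exists>s. cyl \<omega> s \<subseteq> A t" by blast
    qed
    thus ?thesis using opn by blast
  qed
  have CA: "C t \<subseteq> A t" for t
  proof
    fix \<omega> assume w: "\<omega> \<in> C t"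
    hence cw: "cyl \<omega> t = C t" unfolding C_def by (rule cyl_same)
    have faPt: "fa_prob S (\<lambda>E. P E (C t))" using cp_fa[OF cp] by (simp add: C_def)
    have faQt: "fa_prob S (\<lambda>E. Q' E (C t))" using cp_fa[OF Q'(1)] by (simp add: C_def)
    define a where "a = Pu (F \<inter> C t)"
    define b where "b = Pu (-F \<inter> C t)"
    have ab: "Pu (C t) = a + b"
    proof -
      have "C t = (F \<inter> C t) \<union> (-F \<inter> C t)" by auto
      thus ?thesis using fa_add[OF faP, of "F \<inter> C t" "-F \<inter> C t"] F CS cS by (auto simp: a_def b_def)
    qed
    have a1: "a \<ge> \<alpha>" "b \<ge> \<beta>" using al be by (auto simp: a_def b_def)
    have le1: "a + b \<le> 1" using fa_le1[OF sa faP, of "C t"] ab by simp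
    have chP: "Pu (F \<inter> C t) = P F (C t) * Pu (C t)"
      using cp_chain[OF cp F(1), of x t] by (simp add: Pu_def C_def)
    have PF: "P F (C t) = a / (a + b)" using chP ab a1 al be
      by (simp add: a_def[symmetric] field_simps)
    have chQ: "Q' (F \<inter> C t) UNIV = Q' F (C t) * Q' (C t) UNIV"
      using cp_chain[OF Q'(1) F(1), of x t] by (simp add: C_def)
    have "Q' (F \<inter> C t) UNIV = a / pF" using F CS s.Int[OF F(1) CS] by (simp add: Q'(2) Q_def a_def Int_commute)
    moreover have "Q' (C t) UNIV = a / pF" using F CS s.Int[OF F(1) CS] by (simp add: Q'(2) Q_def a_def Int_commute)
    moreover have "a / pF > 0" using a1 al pFpos by simp
    ultimately have QF: "Q' F (C t) = 1" using chQ pFpos by (auto simp: field_simps)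
    have "\<beta> \<le> \<bar>P F (C t) - Q' F (C t)\<bar>"
    proof -
      have "1 - a/(a+b) = b/(a+b)" using a1 al be by (simp add: field_simps)
      moreover have "b \<le> b/(a+b)" using a1 al be le1
        by (simp add: le_divide_eq)
      ultimately show ?thesis using PF QF a1 by simp
    qed
    also have "\<dots> \<le> (SUP E\<in>S. \<bar>P E (C t) - Q' E (C t)\<bar>)"
    proof (rule cSUP_upper[OF F(1)])
      show "bdd_above ((\<lambda>E. \<bar>P E (C t) - Q' E (C t)\<bar>) ` S)"
      proof (rule bdd_aboveI2)
        fix E
        show "\<bar>P E (C t) - Q' E (C t)\<bar> \<le> 2"
          using fa_nonneg[OF faPt, of E] fa_le1[OF sa faPt, of E]
                fa_nonneg[OF faQt, of E] fa_le1[OF sa faQt, of E] by simp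
      qed
    qed
    finally show "\<omega> \<in> A t" using be(1) cw by (simp add: A_def)
  qed
  have lowA: "\<alpha> / pF \<le> Q' (A t) UNIV" for t
  proof -
    have "Pu (C t \<inter> F) \<le> Pu (A t \<inter> F)"
      by (rule fa_mono[OF sa faP]) (use CS AS CA F in auto)
    moreover have "\<alpha> \<le> Pu (C t \<inter> F)" using al(2)[of t] by (simp add: Int_commute)
    ultimately show ?thesis using AS pFpos by (simp add: Q'(2) Q_def divide_right_mono)
  qed
  have "(\<lambda>t. Q' (A t) UNIV) \<longlonglongrightarrow> 0"
  proof -
    have m: "\<forall>\<epsilon>>0. (\<lambda>t. Q' {\<omega>. (SUP E\<in>S. \<bar>P E (cyl \<omega> t) - Q' E (cyl \<omega> t)\<bar>) > \<epsilon>} UNIV) \<longlonglongrightarrow> 0"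
      using Q'(3) unfolding merges_def by blast
    have "\<beta>/2 > 0" using be(1) by simp
    from m[rule_format, OF this] show ?thesis unfolding A_def .
  qed
  hence "\<alpha> / pF \<le> 0" by (rule LIMSEQ_le_const) (use lowA in auto)
  thus False using al(1) pFpos by (simp add: divide_le_0_iff)
qed


theorem theorem6:
  fixes S :: "('x::countable) path set set" and \<epsilon> :: real
  assumes "sigma_algebra UNIV S"
    and "\<forall>U. open_paths U \<longrightarrow> U \<in> S"
    and "0 < \<epsilon>" and "\<epsilon> \<le> 1"
  shows "\<exists>T :: 'x cprob \<Rightarrow> 'x path set.
           (\<forall>P\<in>Delta_BD S. open_paths (T P)) \<and>
           (\<forall>P\<in>Delta_BD S. P (T P) UNIV \<le> \<epsilon>) \<and>
           (\<forall>\<zeta> :: 'x cprob pmf. finite (set_pmf \<zeta>) \<and> set_pmf \<zeta> \<subseteq> Delta_BD S \<longrightarrow>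
              (\<exists>C\<in>cylinders. \<forall>\<omega>\<in>C.
                 measure_pmf.prob \<zeta> {P\<in>Delta_BD S. \<omega> \<notin> T P} = 0))"
proof -
  define x :: "'x path" where "x = (\<lambda>_. undefined)"
  define tt where "tt P = (LEAST t. P (cyl x t) UNIV \<le> \<epsilon>)" for P :: "'x cprob"
  define T where "T P = cyl x (tt P)" for P :: "'x cprob"
  have small: "P (T P) UNIV \<le> \<epsilon>" if "P \<in> Delta_BD S" for P
    unfolding T_def tt_def
    by (rule LeastI_ex) (rule BD_small[OF assms(1,2) that assms(3)])
  have op: "open_paths (T P)" for P unfolding T_def by (rule open_cyl)
  have iii: "\<exists>C\<in>cylinders. \<forall>\<omega>\<in>C. measure_pmf.prob \<zeta> {P\<in>Delta_BD S. \<omega> \<notin> T P} = 0"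
    if fin: "finite (set_pmf \<zeta>)" for \<zeta> :: "'x cprob pmf"
  proof
    define N where "N = Max (tt ` set_pmf \<zeta>)"
    show "cyl x N \<in> cylinders" by (auto simp: cylinders_def)
    show "\<forall>\<omega>\<in>cyl x N. measure_pmf.prob \<zeta> {P\<in>Delta_BD S. \<omega> \<notin> T P} = 0"
    proof
      fix \<omega> assume w: "\<omega> \<in> cyl x N"
      have "\<omega> \<in> T P" if "P \<in> set_pmf \<zeta>" for P
      proof -
        have "tt P \<le> N" unfolding N_def using fin that by (auto intro: Max_ge)
        thus ?thesis using w cyl_antimono unfolding T_def by blast
      qed
      thus "measure_pmf.prob \<zeta> {P\<in>Delta_BD S. \<omega> \<notin> T P} = 0"
        by (auto simp: measure_pmf_zero_iff)
    qed
  qed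
  show ?thesis using small op iii by blast
qed

end
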